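(* Let $k>4$ be an odd integer. Then for each $l\in\{2k-2,\,2k-4\}$ there exist permutations $g_1,g_2\in S(l)$ such that each of $g_1,g_2$ has only cycles of length $k$ or $1$, and $g_1g_2^{-1}$ has only cycles of even length.
   Context: $S(l)$ denotes the symmetric group on $\{1,\dots,l\}$. *)

theory Defs
  imports "HOL-Combinatorics.Combinatorics"
begin

text \<open>Cycle lengths of a permutation g of S: the length of the cycle through x is
  the cardinality of its orbit (fixed points give cycles of length 1).\<close>
definition cycle_lengths :: "(nat \<Rightarrow> nat) \<Rightarrow> nat set \<Rightarrow> nat set" where
  "cycle_lengths g S = (\<lambda>x. card (orbit g x)) ` S"

end

theory Submission
  imports Defs
begin

lemma enum_step:
  fixes g f :: "nat \<Rightarrow> nat"
  assumes st: "\<And>i. Suc i < n \<Longrightarrow> g (f i) = f (Suc i)"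
    and st0: "g (f (n - 1)) = f 0" and j: "j < n"
  shows "g (f j) = f (Suc j mod n)"
proof (cases "Suc j < n")
  case True then show ?thesis using st by simp
next
  case False then have "Suc j = n" using j by auto
  then have "j = n - 1" "Suc j mod n = 0" by auto
  then show ?thesis using st0 by simp
qed

lemma orbit_enum:
  fixes g f :: "nat \<Rightarrow> nat"
  assumes inj: "inj_on f {..<n}" and n: "0 < n"
    and st: "\<And>i. Suc i < n \<Longrightarrow> g (f i) = f (Suc i)"
    and st0: "g (f (n - 1)) = f 0"
    and x: "x \<in> f ` {..<n}"
  shows "card (orbit g x) = n"
proof -
  obtain i where i: "i < n" and xi: "x = f i" using x by auto
  have step: "g (f j) = f (Suc j mod n)" if "j < n" for j
    using enum_step[OF st st0 that] by blast
  have pw: "(g^^m) (f i) = f ((i+m) mod n)" for m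
  proof (induction m)
    case 0 then show ?case using i by simp
  next
    case (Suc m)
    have "(g^^Suc m) (f i) = g (f ((i+m) mod n))" using Suc by simp
    also have "\<dots> = f (Suc ((i+m) mod n) mod n)" using step n by simp
    also have "\<dots> = f ((i + Suc m) mod n)" by (simp add: mod_Suc_eq)
    finally show ?case .
  qed
  have "orbit g (f i) = f ` {..<n}"
  proof
    show "orbit g (f i) \<subseteq> f ` {..<n}"
      unfolding orbit_altdef using pw n by auto
  next
    show "f ` {..<n} \<subseteq> orbit g (f i)"
    proof
      fix y assume "y \<in> f ` {..<n}"
      then obtain j where j: "j < n" "y = f j" by auto
      have "(i + (n - i + j)) mod n = j" using i j by simp
      then have "(g^^(n - i + j)) (f i) = y" using pw j by simp
      moreover have "0 < n - i + j" using i by simp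
      ultimately show "y \<in> orbit g (f i)" unfolding orbit_altdef by blast
    qed
  qed
  then show ?thesis using xi inj by (simp add: card_image)
qed

lemma orbit_fix: "g x = x \<Longrightarrow> card (orbit g x) = 1"
proof -
  assume "g x = x" then have "orbit g x = {x}" using orbit_eq_singleton_iff by metis
  then show ?thesis by simp
qed

lemma permI:
  fixes g :: "nat \<Rightarrow> nat"
  assumes "finite S" "g ` S \<subseteq> S" "inj_on g S" "\<And>x. x \<notin> S \<Longrightarrow> g x = x"
  shows "g permutes S"
  using assms by (intro bij_imp_permutes) (auto simp: bij_betw_def endo_inj_surj)

lemma suc_mod_eq: "i < n \<Longrightarrow> Suc i mod n = (if Suc i = n then 0 else Suc (i::nat))"
  by auto

lemma suc_mod_inj: "i < n \<Longrightarrow> j < n \<Longrightarrow> Suc i mod n = Suc j mod n \<Longrightarrow> i = (j::nat)"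
  by (simp add: suc_mod_eq split: if_splits)

lemma perm_enum:
  fixes g f :: "nat \<Rightarrow> nat"
  assumes inj: "inj_on f {..<n}" and n: "0 < n"
    and st: "\<And>i. Suc i < n \<Longrightarrow> g (f i) = f (Suc i)"
    and st0: "g (f (n - 1)) = f 0"
    and fx: "\<And>x. x \<notin> f ` {..<n} \<Longrightarrow> g x = x"
    and sub: "f ` {..<n} \<subseteq> S"
  shows "g permutes S"
proof -
  have step: "g (f j) = f (Suc j mod n)" if "j < n" for j
    using enum_step[OF st st0 that] by blast
  have "g permutes f ` {..<n}"
  proof (rule permI)
    show "g ` f ` {..<n} \<subseteq> f ` {..<n}" using step n by auto
    show "inj_on g (f ` {..<n})"
    proof (rule inj_onI)
      fix a b assume "a \<in> f ` {..<n}" "b \<in> f ` {..<n}" "g a = g b"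
      then obtain i j where ij: "i < n" "j < n" "a = f i" "b = f j" "f (Suc i mod n) = f (Suc j mod n)"
        using step by auto
      then have "Suc i mod n = Suc j mod n" using inj n by (auto dest: inj_onD)
      then show "a = b" using ij suc_mod_inj by metis
    qed
  qed (use fx in auto)
  then show ?thesis using permutes_subset sub by blast
qed

definition cg2 :: "nat \<Rightarrow> nat \<Rightarrow> nat" where
  "cg2 k x = (if 1 \<le> x \<and> x < k then x+1 else if x = k then 1 else x)"

lemma cg2_facts:
  assumes "k > 4" "k \<le> l"
  shows "cg2 k permutes {1..l}" "x \<in> {1..l} \<Longrightarrow> card (orbit (cg2 k) x) \<in> {k, 1}"
proof -
  have inj: "inj_on (\<lambda>i::nat. i + 1) {..<k}" by simp
  have st: "\<And>i. Suc i < k \<Longrightarrow> cg2 k (i + 1) = Suc i + 1" by (simp add: cg2_def)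
  have st0: "cg2 k (k - 1 + 1) = 0 + 1" using assms by (simp add: cg2_def)
  have mem: "x \<in> (\<lambda>i. i + 1) ` {..<k}" if "1 \<le> x" "x \<le> k" for x
    using that by (intro rev_image_eqI[of "x - 1"]) auto
  have fx: "cg2 k x = x" if "\<not> (1 \<le> x \<and> x \<le> k)" for x using that assms by (auto simp: cg2_def)
  show "cg2 k permutes {1..l}"
  proof (rule perm_enum[OF inj _ st st0])
    show "\<And>x. x \<notin> (\<lambda>i. i + 1) ` {..<k} \<Longrightarrow> cg2 k x = x" using mem fx by blast
  qed (use assms in auto)
  show "card (orbit (cg2 k) x) \<in> {k, 1}" if "x \<in> {1..l}"
  proof (cases "x \<le> k")
    case True
    have "card (orbit (cg2 k) x) = k"
      by (rule orbit_enum[OF inj _ st st0]) (use assms True that mem in auto)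
    then show ?thesis by simp
  next
    case False then show ?thesis using orbit_fix[of "cg2 k" x] fx by simp
  qed
qed

definition a1 :: "nat \<Rightarrow> nat \<Rightarrow> nat" where
  "a1 k x = (if k+1 \<le> x \<and> x < 2*k-2 then x+1 else if x = 2*k-2 then 2 else if x = 2 then 1 else if x = 1 then k+1 else x)"
definition ea1 :: "nat \<Rightarrow> nat \<Rightarrow> nat" where
  "ea1 k i = (if i<k-2 then k+1+i else if i=k-2 then 2 else 1)"

lemma a1_facts:
  assumes "k > 4"
  shows "a1 k permutes {1..2*k-2}" "x \<in> {1..2*k-2} \<Longrightarrow> card (orbit (a1 k) x) \<in> {k, 1}"
proof -
  have inj: "inj_on (ea1 k) {..<k}" using assms by (auto simp: inj_on_def ea1_def split: if_splits)
  have st: "a1 k (ea1 k i) = ea1 k (Suc i)" if i: "Suc i < k" for i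
  proof -
    consider "i < k-3" | "i = k-3" | "i = k-2" using i by linarith
    then show ?thesis by cases (use assms in \<open>auto simp: a1_def ea1_def\<close>)
  qed
  have st0: "a1 k (ea1 k (k - 1)) = ea1 k 0" using assms by (auto simp: a1_def ea1_def)
  have mem: "x \<in> ea1 k ` {..<k}" if "1 \<le> x" "x \<le> 2*k-2" "x \<le> 2 \<or> k+1 \<le> x" for x
  proof -
    have "x = 1 \<or> x = 2 \<or> k+1 \<le> x" using that by linarith
    then consider "x = 1" | "x = 2" | "k+1 \<le> x" by blast
    then show ?thesis
    proof cases
      case 1 then show ?thesis using assms by (intro rev_image_eqI[of "k - 1"]) (auto simp: ea1_def)
    next
      case 2 then show ?thesis using assms by (intro rev_image_eqI[of "k - 2"]) (auto simp: ea1_def)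
    next
      case 3 then show ?thesis using assms that by (intro rev_image_eqI[of "x - k - 1"]) (auto simp: ea1_def)
    qed
  qed
  have fx: "a1 k x = x" if "\<not> (1 \<le> x \<and> x \<le> 2*k-2 \<and> (x \<le> 2 \<or> k+1 \<le> x))" for x
    using that assms by (auto simp: a1_def)
  have sub: "ea1 k ` {..<k} \<subseteq> {1..2*k-2}" using assms by (auto simp: ea1_def)
  show "a1 k permutes {1..2*k-2}"
  proof (rule perm_enum[OF inj _ st st0 _ sub])
    show "\<And>x. x \<notin> ea1 k ` {..<k} \<Longrightarrow> a1 k x = x" using mem fx by blast
  qed (use assms in auto)
  show "card (orbit (a1 k) x) \<in> {k, 1}" if x: "x \<in> {1..2*k-2}"
  proof (cases "x \<le> 2 \<or> k+1 \<le> x")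
    case True
    have "card (orbit (a1 k) x) = k"
      by (rule orbit_enum[OF inj _ st st0]) (use assms True x mem in auto)
    then show ?thesis by simp
  next
    case False then show ?thesis using orbit_fix[of "a1 k" x] fx by simp
  qed
qed

definition aP :: "nat \<Rightarrow> nat \<Rightarrow> nat" where
  "aP k x = (if x=1 then k else if 4\<le>x \<and> x\<le>k then x-1 else if x=3 then 1 else if x=2 then k+1 else if k+1\<le>x \<and> x<2*k-2 then x+1 else if x=2*k-2 then 2 else x)"
definition eaP1 :: "nat \<Rightarrow> nat \<Rightarrow> nat" where "eaP1 k i = (if i=0 then 1 else k+1-i)"
definition eaP2 :: "nat \<Rightarrow> nat \<Rightarrow> nat" where "eaP2 k i = (if i=0 then 2 else k+i)"

lemma aP_comp: assumes "k > 4" shows "a1 k = aP k \<circ> cg2 k"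
proof
  fix x
  consider "x = 0" | "x = 1" | "x = 2" | "x = 3" | "4 \<le> x \<and> x < k" | "x = k" | "k < x" by linarith
  then show "a1 k x = (aP k \<circ> cg2 k) x"
    by cases (use assms in \<open>auto simp: a1_def aP_def cg2_def\<close>)
qed

lemma aP_orb:
  assumes "k > 4" "x \<in> {1..2*k-2}"
  shows "card (orbit (aP k) x) = k - 1"
proof (cases "x = 1 \<or> (3 \<le> x \<and> x \<le> k)")
  case True
  show ?thesis
  proof (rule orbit_enum[where f = "eaP1 k"])
    show "inj_on (eaP1 k) {..<k-1}" using assms by (auto simp: inj_on_def eaP1_def split: if_splits)
    show "aP k (eaP1 k i) = eaP1 k (Suc i)" if i: "Suc i < k - 1" for i
    proof -
      consider "i = 0" | "1 \<le> i" by linarith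
      then show ?thesis by cases (use assms i in \<open>auto simp: aP_def eaP1_def\<close>)
    qed
    show "aP k (eaP1 k (k - 1 - 1)) = eaP1 k 0" using assms by (auto simp: aP_def eaP1_def)
    show "x \<in> eaP1 k ` {..<k-1}"
    proof (cases "x = 1")
      case True then show ?thesis using assms by (intro rev_image_eqI[of 0]) (auto simp: eaP1_def)
    next
      case False then show ?thesis using \<open>x = 1 \<or> (3 \<le> x \<and> x \<le> k)\<close> assms
        by (intro rev_image_eqI[of "k + 1 - x"]) (auto simp: eaP1_def)
    qed
  qed (use assms in auto)
next
  case False
  show ?thesis
  proof (rule orbit_enum[where f = "eaP2 k"])
    show "inj_on (eaP2 k) {..<k-1}" using assms by (auto simp: inj_on_def eaP2_def split: if_splits)
    show "aP k (eaP2 k i) = eaP2 k (Suc i)" if i: "Suc i < k - 1" for i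
    proof -
      consider "i = 0" | "1 \<le> i" by linarith
      then show ?thesis by cases (use assms i in \<open>auto simp: aP_def eaP2_def\<close>)
    qed
    show "aP k (eaP2 k (k - 1 - 1)) = eaP2 k 0" using assms by (auto simp: aP_def eaP2_def)
    show "x \<in> eaP2 k ` {..<k-1}"
    proof (cases "x = 2")
      case True then show ?thesis using assms by (intro rev_image_eqI[of 0]) (auto simp: eaP2_def)
    next
      case False then show ?thesis using \<open>\<not> (x = 1 \<or> (3 \<le> x \<and> x \<le> k))\<close> assms
        by (intro rev_image_eqI[of "x - k"]) (auto simp: eaP2_def)
    qed
  qed (use assms in auto)
qed

definition b1 :: "nat \<Rightarrow> nat \<Rightarrow> nat" where
  "b1 k x = (if k+1\<le>x \<and> x<2*k-4 then x+1 else if x=2*k-4 then 2 else if x=2 then 4 else if x=4 then 1 else if x=1 then 3 else if x=3 then k+1 else x)"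
definition eb1 :: "nat \<Rightarrow> nat \<Rightarrow> nat" where
  "eb1 k i = (if i < k-4 then k+1+i else if i=k-4 then 2 else if i=k-3 then 4 else if i=k-2 then 1 else 3)"
definition bP :: "nat \<Rightarrow> nat \<Rightarrow> nat" where
  "bP k x = (if x=1 then k else if 6\<le>x\<and>x\<le>k then x-1 else if x=5 then 1 else if x=2 then 3 else if x=3 then 4 else if x=4 then k+1 else if k+1\<le>x\<and>x<2*k-4 then x+1 else if x=2*k-4 then 2 else x)"
definition ebP1 :: "nat \<Rightarrow> nat \<Rightarrow> nat" where "ebP1 k i = (if i=0 then 1 else k+1-i)"
definition ebP2 :: "nat \<Rightarrow> nat \<Rightarrow> nat" where
  "ebP2 k i = (if i=0 then 2 else if i=1 then 3 else if i=2 then 4 else k+i-2)"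

context fixes k :: nat assumes k: "k > 4" begin
lemma cg2_lt: "1 \<le> x \<Longrightarrow> x < k \<Longrightarrow> cg2 k x = x + 1" using k by (simp add: cg2_def, arith?)
lemma cg2_1: "cg2 k 1 = 2" using k by (simp add: cg2_def)
lemma cg2_k: "cg2 k k = 1" using k by (simp add: cg2_def, arith?)
lemma cg2_out: "x = 0 \<or> k < x \<Longrightarrow> cg2 k x = x" using k by (auto simp: cg2_def)

lemma b1_mid: "k+1 \<le> x \<Longrightarrow> x < 2*k-4 \<Longrightarrow> b1 k x = x+1" using k by (simp add: b1_def, arith?)
lemma b1_last: "b1 k (2*k-4) = 2" using k by (simp add: b1_def, arith?)
lemma b1_2: "b1 k 2 = 4" using k by (simp add: b1_def, arith?)
lemma b1_4: "b1 k 4 = 1" using k by (simp add: b1_def, arith?)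
lemma b1_1: "b1 k 1 = 3" using k by (simp add: b1_def, arith?)
lemma b1_3: "b1 k 3 = k+1" using k by (simp add: b1_def, arith?)
lemma b1_fix: "\<not> (1 \<le> x \<and> x \<le> 2*k-4 \<and> (x \<le> 4 \<or> k+1 \<le> x)) \<Longrightarrow> b1 k x = x"
  using k by (auto simp: b1_def)

lemma eb1_lt: "i < k-4 \<Longrightarrow> eb1 k i = k+1+i" using k by (simp add: eb1_def, arith?)
lemma eb1_4: "eb1 k (k-4) = 2" using k by (simp add: eb1_def, arith?)
lemma eb1_3: "eb1 k (k-3) = 4" using k by (simp add: eb1_def, arith?)
lemma eb1_2: "eb1 k (k-2) = 1" using k by (simp add: eb1_def, arith?)
lemma eb1_1: "eb1 k (k-1) = 3" using k by (simp add: eb1_def, arith?)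

lemma bP_1: "bP k 1 = k" using k by (simp add: bP_def, arith?)
lemma bP_mid1: "6 \<le> x \<Longrightarrow> x \<le> k \<Longrightarrow> bP k x = x - 1" using k by (simp add: bP_def, arith?)
lemma bP_5: "bP k 5 = 1" using k by (simp add: bP_def, arith?)
lemma bP_2: "bP k 2 = 3" using k by (simp add: bP_def, arith?)
lemma bP_3: "bP k 3 = 4" using k by (simp add: bP_def, arith?)
lemma bP_4: "bP k 4 = k+1" using k by (simp add: bP_def, arith?)
lemma bP_mid2: "k+1 \<le> x \<Longrightarrow> x < 2*k-4 \<Longrightarrow> bP k x = x+1" using k by (simp add: bP_def, arith?)
lemma bP_last: "bP k (2*k-4) = 2" using k by (simp add: bP_def, arith?)
lemma bP_out: "x = 0 \<or> 2*k-4 < x \<Longrightarrow> bP k x = x" using k by (auto simp: bP_def)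

lemma b1_step: "Suc i < k \<Longrightarrow> b1 k (eb1 k i) = eb1 k (Suc i)"
proof -
  assume i: "Suc i < k"
  consider "i < k-5" | "i = k-5" | "i = k-4" | "i = k-3" | "i = k-2" using i by linarith
  then show ?thesis
  proof cases
    case 1
    have "eb1 k i = k+1+i" by (rule eb1_lt) (use 1 in linarith)
    moreover have "eb1 k (Suc i) = k+1+Suc i" by (rule eb1_lt) (use 1 in linarith)
    moreover have "b1 k (k+1+i) = k+1+i+1" by (rule b1_mid) (use 1 in linarith)+
    ultimately show ?thesis by simp
  next
    case 2
    have "eb1 k i = 2*k-4" using 2 k by (subst eb1_lt) linarith+
    moreover have "Suc i = k-4" using 2 k by linarith
    ultimately show ?thesis using b1_last eb1_4 by simp
  next
    case 3
    moreover have "Suc i = k-3" using 3 k by linarith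
    ultimately show ?thesis using b1_2 eb1_4 eb1_3 by simp
  next
    case 4
    moreover have "Suc i = k-2" using 4 k by linarith
    ultimately show ?thesis using b1_4 eb1_3 eb1_2 by simp
  next
    case 5
    moreover have "Suc i = k-1" using 5 k by linarith
    ultimately show ?thesis using b1_1 eb1_2 eb1_1 by simp
  qed
qed

lemma b1_step0: "b1 k (eb1 k (k - 1)) = eb1 k 0"
proof -
  have "eb1 k 0 = k+1" by (subst eb1_lt) (use k in linarith, simp)
  then show ?thesis using eb1_1 b1_3 by simp
qed

lemma bP_comp: "b1 k = bP k \<circ> cg2 k"
proof
  fix x
  consider "x = 0" | "x = 1" | "x = 2" | "x = 3" | "x = 4" | "5 \<le> x \<and> x < k" | "x = k" | "k < x" by linarith
  then show "b1 k x = (bP k \<circ> cg2 k) x"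
  proof cases
    case 1 then show ?thesis using b1_fix cg2_out bP_out by simp
  next
    case 2 then show ?thesis using b1_1 cg2_1 bP_2 k by simp
  next
    case 3 then show ?thesis using b1_2 cg2_lt[of 2] bP_3 k by simp
  next
    case 4 then show ?thesis using b1_3 cg2_lt[of 3] bP_4 k by simp
  next
    case 5 then show ?thesis using b1_4 cg2_lt[of 4] bP_5 k by simp
  next
    case 6
    have "b1 k x = x" by (rule b1_fix) (use 6 in linarith)
    moreover have "cg2 k x = x + 1" by (rule cg2_lt) (use 6 in linarith)+
    moreover have "bP k (x+1) = x" using bP_mid1[of "x+1"] 6 by simp
    ultimately show ?thesis by simp
  next
    case 7
    have "b1 k x = x" by (rule b1_fix) (use 7 k in linarith)
    then show ?thesis using 7 cg2_k bP_1 by simp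
  next
    case 8
    then have c: "cg2 k x = x" by (intro cg2_out) simp
    consider "x < 2*k-4" | "x = 2*k-4" | "2*k-4 < x" by linarith
    then show ?thesis
    proof cases
      case 1 then show ?thesis using c b1_mid bP_mid2 8 by simp
    next
      case 2 then show ?thesis using c b1_last bP_last by simp
    next
      case 3
      have "b1 k x = x" by (rule b1_fix) (use 3 in linarith)
      then show ?thesis using c bP_out 3 by simp
    qed
  qed
qed

lemma bP1_step: "Suc i < k - 3 \<Longrightarrow> bP k (ebP1 k i) = ebP1 k (Suc i)"
proof -
  assume i: "Suc i < k - 3"
  show ?thesis
  proof (cases "i = 0")
    case True then show ?thesis using bP_1 by (simp add: ebP1_def)
  next
    case False
    have "ebP1 k i = k+1-i" "ebP1 k (Suc i) = k - i" using False by (simp_all add: ebP1_def)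
    moreover have "bP k (k+1-i) = k+1-i-1" by (rule bP_mid1) (use i False in linarith)+
    ultimately show ?thesis by simp
  qed
qed

lemma bP1_step0: "bP k (ebP1 k (k - 3 - 1)) = ebP1 k 0"
proof -
  have "ebP1 k (k-3-1) = 5" using k by (simp add: ebP1_def)
  then show ?thesis using bP_5 by (simp add: ebP1_def)
qed

lemma bP2_step: "Suc i < k - 1 \<Longrightarrow> bP k (ebP2 k i) = ebP2 k (Suc i)"
proof -
  assume i: "Suc i < k - 1"
  consider "i = 0" | "i = 1" | "i = 2" | "3 \<le> i" by linarith
  then show ?thesis
  proof cases
    case 1 then show ?thesis using bP_2 by (simp add: ebP2_def)
  next
    case 2 then show ?thesis using bP_3 by (simp add: ebP2_def)
  next
    case 3 then show ?thesis using bP_4 by (simp add: ebP2_def)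
  next
    case 4
    have "ebP2 k i = k+i-2" "ebP2 k (Suc i) = k+i-1" using 4 by (simp_all add: ebP2_def)
    moreover have "bP k (k+i-2) = k+i-2+1" by (rule bP_mid2) (use i 4 in linarith)+
    moreover have "k+i-2+1 = k+i-1" using 4 by linarith
    ultimately show ?thesis by simp
  qed
qed

lemma bP2_step0: "bP k (ebP2 k (k - 1 - 1)) = ebP2 k 0"
proof -
  have "ebP2 k (k-1-1) = 2*k-4" using k by (simp add: ebP2_def, arith?)
  then show ?thesis using bP_last by (simp add: ebP2_def)
qed


lemma eb1_inj: "inj_on (eb1 k) {..<k}" using k by (auto simp: inj_on_def eb1_def split: if_splits)

lemma b1_facts:
  shows "b1 k permutes {1..2*k-4}" "x \<in> {1..2*k-4} \<Longrightarrow> card (orbit (b1 k) x) \<in> {k, 1}"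
proof -
  note inj = eb1_inj
  note st = b1_step
  note st0 = b1_step0
  have mem: "x \<in> eb1 k ` {..<k}" if "1 \<le> x" "x \<le> 2*k-4" "x \<le> 4 \<or> k+1 \<le> x" for x
  proof -
    have "x = 1 \<or> x = 2 \<or> x = 3 \<or> x = 4 \<or> k+1 \<le> x" using that by linarith
    then consider "x = 1" | "x = 2" | "x = 3" | "x = 4" | "k+1 \<le> x" by blast
    then show ?thesis
    proof cases
      case 1 then show ?thesis using k eb1_2 by (intro rev_image_eqI[of "k - 2"]) auto
    next
      case 2 then show ?thesis using k eb1_4 by (intro rev_image_eqI[of "k - 4"]) auto
    next
      case 3 then show ?thesis using k eb1_1 by (intro rev_image_eqI[of "k - 1"]) auto
    next
      case 4 then show ?thesis using k eb1_3 by (intro rev_image_eqI[of "k - 3"]) auto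
    next
      case 5
      have "eb1 k (x - k - 1) = x" using 5 that by (subst eb1_lt) linarith+
      then show ?thesis using 5 that by (intro rev_image_eqI[of "x - k - 1"]) auto
    qed
  qed
  note fx = b1_fix
  have sub: "eb1 k ` {..<k} \<subseteq> {1..2*k-4}" using k by (auto simp: eb1_def)
  show "b1 k permutes {1..2*k-4}"
  proof (rule perm_enum[OF inj _ st st0 _ sub])
    show "\<And>x. x \<notin> eb1 k ` {..<k} \<Longrightarrow> b1 k x = x" using mem fx by blast
  qed (use k in auto)
  show "card (orbit (b1 k) x) \<in> {k, 1}" if x: "x \<in> {1..2*k-4}"
  proof (cases "x \<le> 4 \<or> k+1 \<le> x")
    case True
    have "card (orbit (b1 k) x) = k"
      by (rule orbit_enum[OF inj _ st st0]) (use k True x mem in auto)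
    then show ?thesis by simp
  next
    case False then show ?thesis using orbit_fix[of "b1 k" x] fx x by simp
  qed
qed

lemma bP_orb:
  assumes "x \<in> {1..2*k-4}"
  shows "card (orbit (bP k) x) \<in> {k - 3, k - 1}"
proof (cases "x = 1 \<or> (5 \<le> x \<and> x \<le> k)")
  case True
  have "card (orbit (bP k) x) = k - 3"
  proof (rule orbit_enum[where f = "ebP1 k", OF _ _ bP1_step bP1_step0])
    show "inj_on (ebP1 k) {..<k-3}" using k by (auto simp: inj_on_def ebP1_def split: if_splits)
    show "x \<in> ebP1 k ` {..<k-3}"
    proof (cases "x = 1")
      case True then show ?thesis using k by (intro rev_image_eqI[of 0]) (auto simp: ebP1_def)
    next
      case False then show ?thesis using \<open>x = 1 \<or> (5 \<le> x \<and> x \<le> k)\<close> k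
        by (intro rev_image_eqI[of "k + 1 - x"]) (auto simp: ebP1_def)
    qed
  qed (use k in auto)
  then show ?thesis by simp
next
  case False
  have "card (orbit (bP k) x) = k - 1"
  proof (rule orbit_enum[where f = "ebP2 k", OF _ _ bP2_step bP2_step0])
    show "inj_on (ebP2 k) {..<k-1}" using k by (auto simp: inj_on_def ebP2_def split: if_splits)
    show "x \<in> ebP2 k ` {..<k-1}"
    proof -
      have "x = 2 \<or> x = 3 \<or> x = 4 \<or> k+1 \<le> x" using False assms by auto
      then consider "x = 2" | "x = 3" | "x = 4" | "k+1 \<le> x" by blast
      then show ?thesis
      proof cases
        case 1 then show ?thesis using k by (intro rev_image_eqI[of 0]) (auto simp: ebP2_def)
      next
        case 2 then show ?thesis using k by (intro rev_image_eqI[of 1]) (auto simp: ebP2_def)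
      next
        case 3 then show ?thesis using k by (intro rev_image_eqI[of 2]) (auto simp: ebP2_def)
      next
        case 4 then show ?thesis using k assms by (intro rev_image_eqI[of "x + 2 - k"]) (auto simp: ebP2_def)
      qed
    qed
  qed (use k in auto)
  then show ?thesis by simp
qed

end

lemma comp_inv_eq: "g2 permutes S \<Longrightarrow> g1 = P \<circ> g2 \<Longrightarrow> g1 \<circ> inv g2 = P"
proof -
  assume a: "g2 permutes S" "g1 = P \<circ> g2"
  have "g2 \<circ> inv g2 = id" using permutes_surj[OF a(1)] surj_iff by blast
  then show ?thesis using a(2) by (simp add: comp_assoc)
qed

theorem mainTheorem10:
  fixes k :: nat
  assumes "odd k" and "k > 4"
  shows "\<forall>l \<in> {2*k - 2, 2*k - 4}. \<exists>g1 g2.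
           g1 permutes {1..l} \<and> g2 permutes {1..l} \<and>
           cycle_lengths g1 {1..l} \<subseteq> {k, 1} \<and>
           cycle_lengths g2 {1..l} \<subseteq> {k, 1} \<and>
           (\<forall>c \<in> cycle_lengths (g1 \<circ> inv g2) {1..l}. even c)"
proof -
  have e1: "even (k - 1)" "even (k - 3)" using assms(1) assms(2) by auto
  have A: "\<exists>g1 g2.
           g1 permutes {1..2*k-2} \<and> g2 permutes {1..2*k-2} \<and>
           cycle_lengths g1 {1..2*k-2} \<subseteq> {k, 1} \<and>
           cycle_lengths g2 {1..2*k-2} \<subseteq> {k, 1} \<and>
           (\<forall>c \<in> cycle_lengths (g1 \<circ> inv g2) {1..2*k-2}. even c)"
  proof (intro exI conjI)
    have l: "k \<le> 2*k-2" using assms by simp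
    show "a1 k permutes {1..2*k-2}" using a1_facts(1)[OF assms(2)] .
    show p2: "cg2 k permutes {1..2*k-2}" using cg2_facts(1)[OF assms(2) l] .
    show "cycle_lengths (a1 k) {1..2*k-2} \<subseteq> {k, 1}" unfolding cycle_lengths_def by (rule image_subsetI) (rule a1_facts(2)[OF assms(2)])
    show "cycle_lengths (cg2 k) {1..2*k-2} \<subseteq> {k, 1}" unfolding cycle_lengths_def by (rule image_subsetI) (rule cg2_facts(2)[OF assms(2) l])
    have "a1 k \<circ> inv (cg2 k) = aP k" using comp_inv_eq[OF p2 aP_comp[OF assms(2)]] .
    then show "\<forall>c \<in> cycle_lengths (a1 k \<circ> inv (cg2 k)) {1..2*k-2}. even c"
      using aP_orb[OF assms(2)] e1 by (auto simp: cycle_lengths_def)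
  qed
  have B: "\<exists>g1 g2.
           g1 permutes {1..2*k-4} \<and> g2 permutes {1..2*k-4} \<and>
           cycle_lengths g1 {1..2*k-4} \<subseteq> {k, 1} \<and>
           cycle_lengths g2 {1..2*k-4} \<subseteq> {k, 1} \<and>
           (\<forall>c \<in> cycle_lengths (g1 \<circ> inv g2) {1..2*k-4}. even c)"
  proof (intro exI conjI)
    have l: "k \<le> 2*k-4" using assms by simp
    show "b1 k permutes {1..2*k-4}" using b1_facts(1)[OF assms(2)] .
    show p2: "cg2 k permutes {1..2*k-4}" using cg2_facts(1)[OF assms(2) l] .
    show "cycle_lengths (b1 k) {1..2*k-4} \<subseteq> {k, 1}" unfolding cycle_lengths_def by (rule image_subsetI) (rule b1_facts(2)[OF assms(2)])
    show "cycle_lengths (cg2 k) {1..2*k-4} \<subseteq> {k, 1}" unfolding cycle_lengths_def by (rule image_subsetI) (rule cg2_facts(2)[OF assms(2) l])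
    have "b1 k \<circ> inv (cg2 k) = bP k" using comp_inv_eq[OF p2 bP_comp[OF assms(2)]] .
    then show "\<forall>c \<in> cycle_lengths (b1 k \<circ> inv (cg2 k)) {1..2*k-4}. even c"
      using bP_orb[OF assms(2)] e1 by (fastforce simp: cycle_lengths_def)
  qed
  show ?thesis using A B by auto
qed

end
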